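(* Let $1\le p\le\frac{\log 3}{\log 2}$ and let $\epsilon_1,\epsilon_2,\epsilon_3$ be acute angles with $\epsilon_1+\epsilon_2+\epsilon_3=\frac{\pi}{2}$. Then $\sum_{i=1}^3\sin^p\epsilon_i\ge 1$. *)

theory Defs
  imports Complex_Main
begin

end

theory Submission
  imports Defs
begin

lemma aux_nn: "0 \<le> (c::real) \<Longrightarrow> 0 \<le> g1 \<Longrightarrow> 0 \<le> g2 \<Longrightarrow> 0 \<le> c * s^2 * g1 * g2"
  by simp

lemma W0_nonneg:
  fixes x y z :: real
  assumes "-1/2 \<le> x" "x \<le> 1/2" "-1/4 \<le> y" "y \<le> 1/2" "-1/4 \<le> z" "z \<le> 1/2"
    and K: "3/2*(x+y+z) + x^2+y^2+z^2 + x*y+x*z+y*z + 2*x*y*z = 0"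
  shows "(x+y+z) + 23/40*(x^2+y^2+z^2) - 4/25*(x^3+y^3+z^3) \<ge> 0"
proof -
  have eq: "(x+y+z) + 23/40*(x^2+y^2+z^2) - 4/25*(x^3+y^3+z^3) = ((2/3) + (-1091543253/4338501500)*x + (-2419266637/11220262500)*y + (-5456403194/27115634375)*z) * (3/2*(x+y+z) + x^2+y^2+z^2 + x*y+x*z+y*z + 2*x*y*z) + ((622733996/27115634375) * (y - z)^2 * (1/2 - y) * (1/2 - z) + (52313033/13015504500) * (x - y - z)^2 * 1 * (z - (-1/4)) + (666560409/43385015000) * (x - y - z)^2 * (1/2 - x) * (1/2 - x) + (6706180382/81346903125) * (x - y - z)^2 * (1/2 - y) * (y - (-1/4)) + (610823762/81346903125) * (x - y - z)^2 * (y - (-1/4)) * (1/2 - z) + (10479250327/54231268750) * (x - y)^2 * 1 * (z - (-1/4)) + (6536505577/2603100900000) * (x - y + z)^2 * 1 * (1/2 - z) + (27509700221/325387612500) * (x - y + z)^2 * (1/2 - x) * (z - (-1/4)) + (1066095199/65077522500) * (x - y + z)^2 * (x - (-1/2)) * (1/2 - y) + (37586282093/650775225000) * (x - y + z)^2 * (1/2 - y) * (1/2 - y) + (1333143553/54231268750) * (x - y + z)^2 * (1/2 - y) * (1/2 - z) + (18583056557/650775225000) * (x - y + z)^2 * (1/2 - z) * (z - (-1/4)) + (8434586387/81346903125) * (x - z)^2 * (1/2 - x) * (y - (-1/4)) + (8957482159/81346903125) * (x - z)^2 * (1/2 - z) * (z - (-1/4)) + (3577561656/27115634375) * (x)^2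 * (1/2 - x) * (x - (-1/2)) + (60794777/5984140000) * (x + y - z)^2 * 1 * (x - (-1/2)) + (11485172473/325387612500) * (x + y - z)^2 * 1 * (y - (-1/4)) + (23190815609/650775225000) * (x + y - z)^2 * (1/2 - x) * (y - (-1/4)) + (7399882923/216925075000) * (x + y - z)^2 * (x - (-1/2)) * (x - (-1/2)) + (5178682497/108462537500) * (x + y - z)^2 * (1/2 - y) * (y - (-1/4)) + (262617122/2805065625) * (x + y - z)^2 * (1/2 - z) * (1/2 - z) + (560504683/13015504500) * (x + y + z)^2 * 1 * (y - (-1/4)) + (4359463303/86770030000) * (x + y + z)^2 * 1 * (z - (-1/4)) + (447195207/5423126875) * (x + y + z)^2 * (x - (-1/2)) * (x - (-1/2)) + (30400876253/650775225000) * (x + y + z)^2 * (x - (-1/2)) * (1/2 - y) + (1208866057/65077522500) * (x + y + z)^2 * (x - (-1/2)) * (z - (-1/4)) + (9427051189/130155045000) * (x + y + z)^2 * (y - (-1/4)) * (y - (-1/4)) + (1172629661/26031009000) * (x + y + z)^2 * (z - (-1/4)) * (z - (-1/4)))"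
    by algebra
  have "0 \<le> (622733996/27115634375) * (y - z)^2 * (1/2 - y) * (1/2 - z) + (52313033/13015504500) * (x - y - z)^2 * 1 * (z - (-1/4)) + (666560409/43385015000) * (x - y - z)^2 * (1/2 - x) * (1/2 - x) + (6706180382/81346903125) * (x - y - z)^2 * (1/2 - y) * (y - (-1/4)) + (610823762/81346903125) * (x - y - z)^2 * (y - (-1/4)) * (1/2 - z) + (10479250327/54231268750) * (x - y)^2 * 1 * (z - (-1/4)) + (6536505577/2603100900000) * (x - y + z)^2 * 1 * (1/2 - z) + (27509700221/325387612500) * (x - y + z)^2 * (1/2 - x) * (z - (-1/4)) + (1066095199/65077522500) * (x - y + z)^2 * (x - (-1/2)) * (1/2 - y) + (37586282093/650775225000) * (x - y + z)^2 * (1/2 - y) * (1/2 - y) + (1333143553/54231268750) * (x - y + z)^2 * (1/2 - y) * (1/2 - z) + (18583056557/650775225000) * (x - y + z)^2 * (1/2 - z) * (z - (-1/4)) + (8434586387/81346903125) * (x - z)^2 * (1/2 - x) * (y - (-1/4)) + (8957482159/81346903125) * (x - z)^2 * (1/2 - z) * (z - (-1/4)) + (3577561656/27115634375) * (x)^2 * (1/2 - x) * (x - (-1/2)) + (60794777/5984140000) * (x + y - z)^2 * 1 * (x - (-1/2)) + (11485172473/325387612500) * (x + y - z)^2 * 1 * (y - (-1/4)) + (23190815609/650775225000) * (x + y - z)^2 * (1/2 - x) * (y - (-1/4)) + (7399882923/216925075000) * (x + y - z)^2 * (x - (-1/2)) * (x - (-1/2)) + (5178682497/108462537500) * (x + y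 - z)^2 * (1/2 - y) * (y - (-1/4)) + (262617122/2805065625) * (x + y - z)^2 * (1/2 - z) * (1/2 - z) + (560504683/13015504500) * (x + y + z)^2 * 1 * (y - (-1/4)) + (4359463303/86770030000) * (x + y + z)^2 * 1 * (z - (-1/4)) + (447195207/5423126875) * (x + y + z)^2 * (x - (-1/2)) * (x - (-1/2)) + (30400876253/650775225000) * (x + y + z)^2 * (x - (-1/2)) * (1/2 - y) + (1208866057/65077522500) * (x + y + z)^2 * (x - (-1/2)) * (z - (-1/4)) + (9427051189/130155045000) * (x + y + z)^2 * (y - (-1/4)) * (y - (-1/4)) + (1172629661/26031009000) * (x + y + z)^2 * (z - (-1/4)) * (z - (-1/4))"
    using assms by (intro add_nonneg_nonneg aux_nn) auto
  then show ?thesis using eq K by simp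
qed

lemma bern:
  fixes r t :: real
  assumes t: "0 < t" and r: "r \<le> 0 \<or> 1 \<le> r"
  shows "1 + r*(t-1) \<le> t powr r"
proof -
  define h where "h = (\<lambda>t::real. t powr r - r*t)"
  have d: "(h has_real_derivative (r * (s powr (r-1) - 1))) (at s)" if "0 < s" for s
    unfolding h_def using that
    by (auto intro!: derivative_eq_intros simp: algebra_simps)
  have up: "0 \<le> r * (s powr (r-1) - 1)" if "1 \<le> s" for s
  proof (cases "r \<le> 0")
    case True
    have "s powr (r-1) \<le> s powr 0" using that True by (intro powr_mono) auto
    then have "s powr (r-1) - 1 \<le> 0" using that by simp
    then show ?thesis using True by (simp add: mult_nonpos_nonpos)
  next
    case False
    then have "1 \<le> r" using r by auto
    have "s powr 0 \<le> s powr (r-1)" using that \<open>1 \<le> r\<close> by (intro powr_mono) auto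
    then have "0 \<le> s powr (r-1) - 1" using that by simp
    then show ?thesis using \<open>1 \<le> r\<close> by simp
  qed
  have down: "r * (s powr (r-1) - 1) \<le> 0" if "0 < s" "s \<le> 1" for s
  proof (cases "r \<le> 0")
    case True
    have "s powr 0 \<le> s powr (r-1)" using that True by (intro powr_mono') auto
    then have "0 \<le> s powr (r-1) - 1" using that by simp
    then show ?thesis using True by (simp add: mult_nonpos_nonneg)
  next
    case False
    then have "1 \<le> r" using r by auto
    have "s powr (r-1) \<le> s powr 0" using that \<open>1 \<le> r\<close> by (intro powr_mono') auto
    then have "s powr (r-1) - 1 \<le> 0" using that by simp
    then show ?thesis using \<open>1 \<le> r\<close> by (simp add: mult_nonneg_nonpos)
  qed
  have "h 1 \<le> h t"
  proof (cases "1 \<le> t")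
    case True
    show ?thesis
      apply (rule DERIV_nonneg_imp_nondecreasing[OF True])
      subgoal for s by (rule exI[of _ "r * (s powr (r-1) - 1)"]) (use d up in auto)
      done
  next
    case False
    show ?thesis
      apply (rule DERIV_nonpos_imp_nonincreasing[of t 1])
      using False apply simp
      subgoal for s by (rule exI[of _ "r * (s powr (r-1) - 1)"]) (use t d down in auto)
      done
  qed
  then show ?thesis using t by (simp add: h_def algebra_simps)
qed

lemma half_powr:
  fixes q :: real
  assumes h2: "2 powr q = 3"
  shows "(1/2::real) powr q = 1/3" "(1/2::real) powr (q-1) = 2/3" "(2::real) powr (q-2) = 3/4"
proof -
  show "(1/2::real) powr q = 1/3" using h2 by (simp add: powr_divide)
  show "(1/2::real) powr (q-1) = 2/3" using h2 by (simp add: powr_divide powr_diff)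
  show "(2::real) powr (q-2) = 3/4" using h2 by (simp add: powr_diff)
qed

lemma xq_lower:
  fixes q x :: real
  assumes q1: "1 \<le> q" and q2: "q \<le> 2" and h2: "2 powr q = 3" and x0: "0 < x"
  shows "1/3 + 2*q/3*(x-1/2) + 2/3*q*(q-1)*(x-1/2)^2*(1 - 2/3*(2-q)*(x-1/2)) \<le> x powr q"
proof -
  define g where "g = (\<lambda>x::real. x powr q - (1/3 + 2*q/3*(x-1/2) + 2/3*q*(q-1)*(x-1/2)^2*(1 - 2/3*(2-q)*(x-1/2))))"
  define D where "D = (\<lambda>x::real. q * x powr (q-1) - (2*q/3 + 4/3*q*(q-1)*((x-1/2) - (2-q)*(x-1/2)^2)))"
  define D' where "D' = (\<lambda>x::real. q*(q-1) * x powr (q-2) - 4/3*q*(q-1)*(1 - 2*(2-q)*(x-1/2)))"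
  have gd: "(g has_real_derivative D s) (at s)" if "0 < s" for s
    unfolding g_def D_def using that
    apply (intro derivative_eq_intros refl)
    apply (auto simp: power2_eq_square)
    by algebra
  have Dd: "(D has_real_derivative D' s) (at s)" if "0 < s" for s
    unfolding D_def D'_def using that
    apply (intro derivative_eq_intros refl)
    apply (auto simp: power2_eq_square)
    by algebra
  have D'nn: "0 \<le> D' s" if "0 < s" for s
  proof -
    have b: "1 + (q-2)*(2*s-1) \<le> (2*s) powr (q-2)"
      using that q2 by (intro bern) auto
    have "(2*s) powr (q-2) = 3/4 * s powr (q-2)"
      using that half_powr[OF h2] by (simp add: powr_mult)
    with b have b2: "1 + (q-2)*(2*s-1) \<le> 3/4 * s powr (q-2)" by simp
    have e: "4/3*(1 - 2*(2-q)*(s-1/2)) = 4/3*(1 + (q-2)*(2*s-1))" by (simp add: algebra_simps)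
    have "4/3*(1 + (q-2)*(2*s-1)) \<le> 4/3*(3/4 * s powr (q-2))" using b2 by (rule mult_left_mono) simp
    then have "4/3*(1 + (q-2)*(2*s-1)) \<le> s powr (q-2)" by simp
    then have "4/3*(1 - 2*(2-q)*(s-1/2)) \<le> s powr (q-2)" unfolding e .
    then have "0 \<le> s powr (q-2) - 4/3*(1 - 2*(2-q)*(s-1/2))" by simp
    moreover have "0 \<le> q*(q-1)" using q1 by simp
    ultimately have "0 \<le> q*(q-1) * (s powr (q-2) - 4/3*(1 - 2*(2-q)*(s-1/2)))"
      by (rule mult_nonneg_nonneg[rotated])
    moreover have "D' s = q*(q-1) * (s powr (q-2) - 4/3*(1 - 2*(2-q)*(s-1/2)))"
      unfolding D'_def by algebra
    ultimately show ?thesis by simp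
  qed
  have D0: "D (1/2) = 0"
    unfolding D_def using half_powr[OF h2] by simp
  have g0: "g (1/2) = 0"
    unfolding g_def using half_powr[OF h2] by simp
  have "g (1/2) \<le> g x"
  proof (cases "x \<le> 1/2")
    case True
    have Dle: "D s \<le> 0" if "x \<le> s" "s \<le> 1/2" for s
    proof -
      have "D s \<le> D (1/2)"
        apply (rule DERIV_nonneg_imp_nondecreasing[OF \<open>s \<le> 1/2\<close>])
        subgoal for t by (rule exI[of _ "D' t"]) (use that x0 Dd D'nn in auto)
        done
      then show ?thesis using D0 by simp
    qed
    show ?thesis
      apply (rule DERIV_nonpos_imp_nonincreasing[OF True])
      subgoal for t by (rule exI[of _ "D t"]) (use x0 gd Dle in auto)
      done
  next
    case False
    have Dge: "0 \<le> D s" if "1/2 \<le> s" "s \<le> x" for s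
    proof -
      have "D (1/2) \<le> D s"
        apply (rule DERIV_nonneg_imp_nondecreasing[OF \<open>1/2 \<le> s\<close>])
        subgoal for t by (rule exI[of _ "D' t"]) (use that Dd D'nn in auto)
        done
      then show ?thesis using D0 by simp
    qed
    show ?thesis
      apply (rule DERIV_nonneg_imp_nondecreasing[of "1/2" x g])
      using False apply simp
      subgoal for t by (rule exI[of _ "D t"]) (use False gd Dge in auto)
      done
  qed
  then show ?thesis using g0 unfolding g_def by simp
qed

lemma corner:
  fixes q a b c :: real
  assumes q1: "1 \<le> q" and q2: "q \<le> 16/9" and h2: "2 powr q = 3"
    and a0: "0 < a" and a1: "a \<le> 1" and b0: "0 < b" and b1: "b \<le> 1/4" and c0: "0 < c" and c1: "c \<le> 1/4"
    and K: "a^2 + b^2 + c^2 + 2*a*b*c = 1"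
  shows "1 \<le> a powr q + b powr q + c powr q"
proof -
  have ba: "1 + q*(a-1) \<le> a powr q" using bern[of a q] a0 q1 by auto
  have h4: "(4::real) powr q = 9"
  proof -
    have "(4::real) powr q = (2*2) powr q" by simp
    also have "\<dots> = 2 powr q * 2 powr q" using powr_mult[of 2 2 q] by simp
    finally show ?thesis using h2 by simp
  qed
  have small: "16/9 * t^2 \<le> t powr q" if "0 < t" "t \<le> 1/4" for t
  proof -
    have "(4*t) powr 2 \<le> (4*t) powr q" using that q2 by (intro powr_mono') auto
    moreover have "(4*t) powr 2 = 16 * t^2" using that by (simp add: power2_eq_square)
    moreover have "(4*t) powr q = 9 * t powr q" using that h4 by (simp add: powr_mult)
    ultimately show ?thesis by simp
  qed
  have sb: "16/9 * b^2 \<le> b powr q" using small b0 b1 by blast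
  have sc: "16/9 * c^2 \<le> c powr q" using small c0 c1 by blast
  have "2*a*b*c \<le> a*(b^2+c^2)"
  proof -
    have "2*b*c \<le> b^2+c^2" using sum_squares_bound[of b c] by (simp add: algebra_simps)
    then have "a*(2*b*c) \<le> a*(b^2+c^2)" using a0 by (intro mult_left_mono) auto
    then show ?thesis by (simp add: algebra_simps)
  qed
  then have "(1+a)*(1-a) \<le> (1+a)*(b^2+c^2)" using K by (simp add: algebra_simps power2_eq_square)
  then have oa: "1 - a \<le> b^2 + c^2" using a0 by (simp add: mult_le_cancel_left_pos)
  have "0 \<le> (16/9 - q)*(1-a)" using q2 a1 by (intro mult_nonneg_nonneg) auto
  moreover have "(16/9 - q)*(1-a) = 16/9*(1-a) - q*(1-a)" by algebra
  ultimately have "q*(1-a) \<le> 16/9*(1-a)" by linarith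
  also have "\<dots> \<le> 16/9*(b^2+c^2)" using oa by simp
  finally show ?thesis using ba sb sc by (simp add: algebra_simps)
qed

lemma coef_bound:
  fixes q t :: real
  assumes "79/50 \<le> q" "q \<le> 159/100" "-1/2 \<le> t" "t \<le> 1/2"
  shows "23/40 - 4/25*t \<le> (q-1)*(1 - 2/3*(2-q)*t)"
proof -
  define w where "w = (q-1)*(2-q)"
  have w1: "29/50 * (41/100) \<le> w" unfolding w_def using assms by (intro mult_mono) auto
  have w2: "w \<le> 59/100 * (21/50)" unfolding w_def using assms by (intro mult_mono) auto
  define m where "m = 2/3*w - 4/25"
  have "-1/150 \<le> m" "m \<le> 1/150" unfolding m_def using w1 w2 by simp_all
  then have "\<bar>m\<bar> \<le> 1/150" by (simp add: abs_le_iff)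
  moreover have "\<bar>t\<bar> \<le> 1/2" using assms by (simp add: abs_le_iff)
  ultimately have "\<bar>t\<bar> * \<bar>m\<bar> \<le> 1/2 * (1/150)" by (intro mult_mono) auto
  moreover have "t*m \<le> \<bar>t\<bar> * \<bar>m\<bar>" by (simp add: abs_mult[symmetric])
  ultimately have "t*m \<le> 1/300" by linarith
  then have tm: "t*m \<le> 1/300" .
  have E: "(q-1)*(1 - 2/3*(2-q)*t) = (q-1) - t*(m + 4/25)" unfolding m_def w_def by algebra
  have E2: "(q-1) - t*(m + 4/25) = q - 1 - t*m - 4/25*t" by (simp add: algebra_simps)
  have "23/40 - 4/25*t \<le> q - 1 - t*m - 4/25*t" using tm assms(1) by linarith
  then show ?thesis unfolding E E2 .
qed

lemma main_case:
  fixes q a b c :: real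
  assumes q1: "79/50 \<le> q" and q2: "q \<le> 159/100" and h2: "2 powr q = 3"
    and a0: "0 < a" and a1: "a < 1" and b0: "1/4 \<le> b" and b1: "b < 1" and c0: "1/4 \<le> c" and c1: "c < 1"
    and K: "a^2 + b^2 + c^2 + 2*a*b*c = 1"
  shows "1 \<le> a powr q + b powr q + c powr q"
proof -
  define P where "P = (\<lambda>x::real. 1/3 + 2*q/3*(x-1/2) + 2/3*q*(q-1)*(x-1/2)^2*(1 - 2/3*(2-q)*(x-1/2)))"
  have la: "P a \<le> a powr q" unfolding P_def using xq_lower[OF _ _ h2, of a] q1 q2 a0 by simp
  have lb: "P b \<le> b powr q" unfolding P_def using xq_lower[OF _ _ h2, of b] q1 q2 b0 by simp
  have lc: "P c \<le> c powr q" unfolding P_def using xq_lower[OF _ _ h2, of c] q1 q2 c0 by simp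
  define B where "B = (\<lambda>t::real. t + (q-1)*(t^2*(1 - 2/3*(2-q)*t)))"
  have PB: "P x = 1/3 + 2*q/3 * B (x - 1/2)" for x unfolding P_def B_def by algebra
  have BW: "t + t^2*(23/40 - 4/25*t) \<le> B t" if "-1/2 \<le> t" "t \<le> 1/2" for t
  proof -
    have "t^2*(23/40 - 4/25*t) \<le> t^2*((q-1)*(1 - 2/3*(2-q)*t))"
      using coef_bound[OF q1 q2 that] by (intro mult_left_mono) auto
    then show ?thesis unfolding B_def by (simp add: algebra_simps)
  qed
  define x where "x = a - 1/2"
  define y where "y = b - 1/2"
  define z where "z = c - 1/2"
  have Kx: "3/2*(x+y+z) + x^2+y^2+z^2 + x*y+x*z+y*z + 2*x*y*z = 0"
  proof -
    have "3/2*(x+y+z) + x^2+y^2+z^2 + x*y+x*z+y*z + 2*x*y*z = a^2 + b^2 + c^2 + 2*a*b*c - 1"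
      unfolding x_def y_def z_def by algebra
    then show ?thesis using K by simp
  qed
  have W: "(x+y+z) + 23/40*(x^2+y^2+z^2) - 4/25*(x^3+y^3+z^3) \<ge> 0"
    by (rule W0_nonneg[OF _ _ _ _ _ _ Kx]) (use a0 a1 b0 b1 c0 c1 in \<open>simp_all add: x_def y_def z_def\<close>)
  have "(x+y+z) + 23/40*(x^2+y^2+z^2) - 4/25*(x^3+y^3+z^3) =
        (x + x^2*(23/40 - 4/25*x)) + (y + y^2*(23/40 - 4/25*y)) + (z + z^2*(23/40 - 4/25*z))"
    by algebra
  also have "\<dots> \<le> B x + B y + B z"
    using BW[of x] BW[of y] BW[of z] a0 a1 b0 b1 c0 c1 unfolding x_def y_def z_def
    by (intro add_mono) auto
  finally have "0 \<le> B x + B y + B z" using W by linarith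
  then have "0 \<le> 2*q/3 * (B x + B y + B z)" using q1 by simp
  moreover have "P a + P b + P c = 1 + 2*q/3 * (B x + B y + B z)"
    unfolding PB x_def y_def z_def by algebra
  ultimately show ?thesis using la lb lc by linarith
qed

lemma q_facts:
  shows "79/50 \<le> ln 3 / ln (2::real)" "ln 3 / ln (2::real) \<le> 159/100" "(2::real) powr (ln 3 / ln 2) = 3"
proof -
  have l2: "0 < ln (2::real)" by simp
  have "ln ((2::real)^79) \<le> ln (3^50)" by (subst ln_le_cancel_iff) simp_all
  moreover have "ln ((2::real)^79) = 79 * ln 2" by (subst ln_realpow) auto
  moreover have "ln ((3::real)^50) = 50 * ln 3" by (subst ln_realpow) auto
  ultimately have "79 * ln 2 \<le> 50 * ln (3::real)" by linarith
  then show "79/50 \<le> ln 3 / ln (2::real)" using l2 by (simp add: field_simps)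
  have "ln ((3::real)^100) \<le> ln (2^159)" by (subst ln_le_cancel_iff) simp_all
  moreover have "ln ((2::real)^159) = 159 * ln 2" by (subst ln_realpow) auto
  moreover have "ln ((3::real)^100) = 100 * ln 3" by (subst ln_realpow) auto
  ultimately have "100 * ln 3 \<le> 159 * ln (2::real)" by linarith
  then show "ln 3 / ln (2::real) \<le> 159/100" using l2 by (simp add: field_simps)
  show "(2::real) powr (ln 3 / ln 2) = 3" by (simp add: powr_def)
qed

lemma sin_bounds:
  fixes e :: real
  assumes "0 < e" "e < pi/2"
  shows "0 < sin e" "sin e < 1"
proof -
  show "0 < sin e" using assms by (intro sin_gt_zero) auto
  have "0 < cos e" using assms by (intro cos_gt_zero_pi) auto
  then have "0 < (cos e)^2" by simp
  then have "(sin e)^2 < 1" using sin_squared_eq[of e] by simp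
  then show "sin e < 1" using \<open>0 < sin e\<close>
    by (metis abs_of_pos abs_square_less_1)
qed

lemma sum_q:
  fixes q a b c :: real
  assumes q1: "79/50 \<le> q" and q2: "q \<le> 159/100" and h2: "2 powr q = 3"
    and a0: "0 < a" and a1: "a < 1" and b0: "0 < b" and b1: "b < 1" and c0: "0 < c" and c1: "c < 1"
    and K: "a^2 + b^2 + c^2 + 2*a*b*c = 1"
  shows "1 \<le> a powr q + b powr q + c powr q"
proof -
  have K2: "b^2 + a^2 + c^2 + 2*b*a*c = 1" using K by (simp add: algebra_simps)
  have K3: "c^2 + a^2 + b^2 + 2*c*a*b = 1" using K by (simp add: algebra_simps)
  have qa: "1 \<le> q" "q \<le> 16/9" using q1 q2 by auto
  show ?thesis
  proof (cases "b \<le> 1/4 \<and> c \<le> 1/4")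
    case True
    then show ?thesis using corner[OF qa h2, of a b c] a0 a1 b0 c0 K by auto
  next
    case F1: False
    show ?thesis
    proof (cases "a \<le> 1/4 \<and> c \<le> 1/4")
      case True
      then show ?thesis using corner[OF qa h2, of b a c] a0 b0 b1 c0 K2 by auto
    next
      case F2: False
      show ?thesis
      proof (cases "a \<le> 1/4 \<and> b \<le> 1/4")
        case True
        then show ?thesis using corner[OF qa h2, of c a b] a0 b0 c0 c1 K3 by auto
      next
        case F3: False
        have "(1/4 \<le> b \<and> 1/4 \<le> c) \<or> (1/4 \<le> a \<and> 1/4 \<le> c) \<or> (1/4 \<le> a \<and> 1/4 \<le> b)"
          using F1 F2 F3 by linarith
        then show ?thesis
        proof (elim disjE conjE)
          assume "1/4 \<le> b" "1/4 \<le> c"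
          then show ?thesis using main_case[OF q1 q2 h2, of a b c] a0 a1 b1 c1 K by auto
        next
          assume "1/4 \<le> a" "1/4 \<le> c"
          then show ?thesis using main_case[OF q1 q2 h2, of b a c] b0 a1 b1 c1 K2 by auto
        next
          assume "1/4 \<le> a" "1/4 \<le> b"
          then show ?thesis using main_case[OF q1 q2 h2, of c a b] c0 a1 b1 c1 K3 by auto
        qed
      qed
    qed
  qed
qed

theorem lemma2p9:
  fixes p e1 e2 e3 :: real
  assumes "1 \<le> p" and "p \<le> ln 3 / ln 2"
    and "0 < e1" and "e1 < pi / 2"
    and "0 < e2" and "e2 < pi / 2"
    and "0 < e3" and "e3 < pi / 2"
    and "e1 + e2 + e3 = pi / 2"
  shows "sin e1 powr p + sin e2 powr p + sin e3 powr p \<ge> 1"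
proof -
  define q where "q = ln 3 / ln (2::real)"
  have q1: "79/50 \<le> q" and q2: "q \<le> 159/100" and h2: "2 powr q = 3"
    using q_facts unfolding q_def by auto
  define a where "a = sin e1"
  define b where "b = sin e2"
  define c where "c = sin e3"
  have a01: "0 < a" "a < 1" unfolding a_def using sin_bounds assms by auto
  have b01: "0 < b" "b < 1" unfolding b_def using sin_bounds assms by auto
  have c01: "0 < c" "c < 1" unfolding c_def using sin_bounds assms by auto
  have "e3 = pi/2 - (e1 + e2)" using assms by simp
  then have "c = cos (e1 + e2)" unfolding c_def by (simp add: cos_sin_eq)
  then have "c + a*b = cos e1 * cos e2" unfolding a_def b_def by (simp add: cos_add)
  then have "(c + a*b)^2 = (cos e1)^2 * (cos e2)^2" by (simp add: power_mult_distrib)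
  also have "\<dots> = (1 - a^2) * (1 - b^2)" unfolding a_def b_def by (simp add: cos_squared_eq)
  finally have K: "a^2 + b^2 + c^2 + 2*a*b*c = 1" by algebra
  have S: "1 \<le> a powr q + b powr q + c powr q"
    by (rule sum_q[OF q1 q2 h2 a01 b01 c01 K])
  have pq: "p \<le> q" using assms unfolding q_def by simp
  have "a powr q \<le> a powr p" using a01 pq assms by (intro powr_mono') auto
  moreover have "b powr q \<le> b powr p" using b01 pq assms by (intro powr_mono') auto
  moreover have "c powr q \<le> c powr p" using c01 pq assms by (intro powr_mono') auto
  ultimately show ?thesis using S unfolding a_def b_def c_def by linarith
qed

end
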